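(* Let $X$ be a locally compact Hausdorff space, let $\mathcal H = \{H_x\}_{x \in X}$ be a continuous field of Hilbert spaces over $X$, and let $\mathcal M = C_0(X, \mathcal H)$ be the Hilbert $C_0(X)$-module of its continuous sections vanishing at infinity. Let $\mathcal N \subset \mathcal M$ be a closed submodule and for $x \in X$ let $L_x = \overline{\{ n(x) \mid n \in \mathcal N\}} \subset H_x$. Then $\mathcal N$ is an essential submodule of $\mathcal M$ if and only if for every $m \in \mathcal M$ the set $Y_m = \{ x \in X \mid m(x) \notin L_x \}$ is nowhere dense in $X$.
   Context: $\mathcal M$ carries the $C_0(X)$-valued inner product $\langle m, m'\rangle(x) = \langle m(x), m'(x)\rangle_{H_x}$ and the right action $(ma)(x) = m(x)a(x)$. A closed submodule $\mathcal N \subset \mathcal M$ is essential if for every nonzero (not necessarily closed) submodule $\mathcal K \subset \mathcal M$ (a linear subspace with $\mathcal K\, C_0(X) \subset \mathcal K$) one has $\mathcal N \cap \mathcal K \neq \{0\}$. *)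

theory Defs
  imports "HOL-Analysis.Analysis"
begin

text \<open>Fibres of the field are modelled as complex linear subspaces of the common
ambient complex vector space of all functions 'i => complex (every complex vector
space embeds in such a space for a large enough index type), each equipped with its
own inner product.\<close>

type_synonym 'i vec = "'i \<Rightarrow> complex"

definition vzero :: "'i vec" where "vzero = (\<lambda>i. 0)"
definition vadd :: "'i vec \<Rightarrow> 'i vec \<Rightarrow> 'i vec" where "vadd u v = (\<lambda>i. u i + v i)"
definition vsub :: "'i vec \<Rightarrow> 'i vec \<Rightarrow> 'i vec" where "vsub u v = (\<lambda>i. u i - v i)"
definition vsmul :: "complex \<Rightarrow> 'i vec \<Rightarrow> 'i vec" where "vsmul c v = (\<lambda>i. c * v i)"

definition hnorm :: "('i vec \<Rightarrow> 'i vec \<Rightarrow> complex) \<Rightarrow> 'i vec \<Rightarrow> real" where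
  "hnorm ip v = sqrt (Re (ip v v))"

definition complex_hilbert_space :: "'i vec set \<Rightarrow> ('i vec \<Rightarrow> 'i vec \<Rightarrow> complex) \<Rightarrow> bool" where
  "complex_hilbert_space V ip \<longleftrightarrow>
     vzero \<in> V \<and> (\<forall>u\<in>V. \<forall>v\<in>V. vadd u v \<in> V) \<and> (\<forall>c. \<forall>v\<in>V. vsmul c v \<in> V) \<and>
     (\<forall>u\<in>V. \<forall>v\<in>V. \<forall>w\<in>V. ip (vadd u v) w = ip u w + ip v w) \<and>
     (\<forall>c. \<forall>u\<in>V. \<forall>w\<in>V. ip (vsmul c u) w = c * ip u w) \<and>
     (\<forall>u\<in>V. \<forall>v\<in>V. ip v u = cnj (ip u v)) \<and>
     (\<forall>u\<in>V. 0 \<le> Re (ip u u)) \<and>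
     (\<forall>u\<in>V. ip u u = 0 \<longrightarrow> u = vzero) \<and>
     (\<forall>s::nat \<Rightarrow> 'i vec. (\<forall>n. s n \<in> V) \<and>
        (\<forall>e>0. \<exists>N. \<forall>m\<ge>N. \<forall>n\<ge>N. hnorm ip (vsub (s m) (s n)) < e) \<longrightarrow>
        (\<exists>v\<in>V. \<forall>e>0. \<exists>N. \<forall>n\<ge>N. hnorm ip (vsub (s n) v) < e))"

definition is_section :: "'x topology \<Rightarrow> ('x \<Rightarrow> 'i vec set) \<Rightarrow> ('x \<Rightarrow> 'i vec) \<Rightarrow> bool" where
  "is_section X H s \<longleftrightarrow> (\<forall>x. (x \<in> topspace X \<longrightarrow> s x \<in> H x) \<and> (x \<notin> topspace X \<longrightarrow> s x = vzero))"

definition zero_section :: "'x \<Rightarrow> 'i vec" where "zero_section = (\<lambda>x. vzero)"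

text \<open>Continuous field of Hilbert spaces (Dixmier, C*-algebras 10.1.2):
fibres H x with inner products ip x and a space Gamma of "continuous" sections.\<close>
definition continuous_field ::
  "'x topology \<Rightarrow> ('x \<Rightarrow> 'i vec set) \<Rightarrow> ('x \<Rightarrow> 'i vec \<Rightarrow> 'i vec \<Rightarrow> complex) \<Rightarrow> ('x \<Rightarrow> 'i vec) set \<Rightarrow> bool" where
  "continuous_field X H ip \<Gamma> \<longleftrightarrow>
     (\<forall>x\<in>topspace X. complex_hilbert_space (H x) (ip x)) \<and>
     (\<forall>s\<in>\<Gamma>. is_section X H s) \<and>
     zero_section \<in> \<Gamma> \<and>
     (\<forall>s\<in>\<Gamma>. \<forall>t\<in>\<Gamma>. (\<lambda>x. vadd (s x) (t x)) \<in> \<Gamma>) \<and>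
     (\<forall>c. \<forall>s\<in>\<Gamma>. (\<lambda>x. vsmul c (s x)) \<in> \<Gamma>) \<and>
     (\<forall>x\<in>topspace X. \<forall>v\<in>H x. \<forall>e>0. \<exists>s\<in>\<Gamma>. hnorm (ip x) (vsub v (s x)) < e) \<and>
     (\<forall>s\<in>\<Gamma>. continuous_map X euclideanreal (\<lambda>x. hnorm (ip x) (s x))) \<and>
     (\<forall>t. is_section X H t \<and>
          (\<forall>x\<in>topspace X. \<forall>e>0. \<exists>s\<in>\<Gamma>. \<exists>U. openin X U \<and> x \<in> U \<and>
               (\<forall>y\<in>U. hnorm (ip y) (vsub (t y) (s y)) \<le> e))
          \<longrightarrow> t \<in> \<Gamma>)"

definition C0_sections ::
  "'x topology \<Rightarrow> ('x \<Rightarrow> 'i vec set) \<Rightarrow> ('x \<Rightarrow> 'i vec \<Rightarrow> 'i vec \<Rightarrow> complex) \<Rightarrow> ('x \<Rightarrow> 'i vec) set \<Rightarrow> ('x \<Rightarrow> 'i vec) set" where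
  "C0_sections X H ip \<Gamma> =
     {s\<in>\<Gamma>. \<forall>e>0. compactin X {x\<in>topspace X. e \<le> hnorm (ip x) (s x)}}"

definition C0_functions :: "'x topology \<Rightarrow> ('x \<Rightarrow> complex) set" where
  "C0_functions X = {a. continuous_map X euclidean a \<and>
      (\<forall>e>0. compactin X {x\<in>topspace X. e \<le> norm (a x)})}"

definition ract :: "('x \<Rightarrow> 'i vec) \<Rightarrow> ('x \<Rightarrow> complex) \<Rightarrow> ('x \<Rightarrow> 'i vec)" where
  "ract m a = (\<lambda>x. vsmul (a x) (m x))"

definition submodule ::
  "'x topology \<Rightarrow> ('x \<Rightarrow> 'i vec set) \<Rightarrow> ('x \<Rightarrow> 'i vec \<Rightarrow> 'i vec \<Rightarrow> complex) \<Rightarrow> ('x \<Rightarrow> 'i vec) set \<Rightarrow> ('x \<Rightarrow> 'i vec) set \<Rightarrow> bool" where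
  "submodule X H ip \<Gamma> K \<longleftrightarrow>
     K \<subseteq> C0_sections X H ip \<Gamma> \<and> zero_section \<in> K \<and>
     (\<forall>s\<in>K. \<forall>t\<in>K. (\<lambda>x. vadd (s x) (t x)) \<in> K) \<and>
     (\<forall>c. \<forall>s\<in>K. (\<lambda>x. vsmul c (s x)) \<in> K) \<and>
     (\<forall>s\<in>K. \<forall>a\<in>C0_functions X. ract s a \<in> K)"

text \<open>Closed in the norm of the Hilbert module, i.e. the sup norm
||m|| = sup_x ||m(x)||.\<close>
definition closed_submodule ::
  "'x topology \<Rightarrow> ('x \<Rightarrow> 'i vec set) \<Rightarrow> ('x \<Rightarrow> 'i vec \<Rightarrow> 'i vec \<Rightarrow> complex) \<Rightarrow> ('x \<Rightarrow> 'i vec) set \<Rightarrow> ('x \<Rightarrow> 'i vec) set \<Rightarrow> bool" where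
  "closed_submodule X H ip \<Gamma> N \<longleftrightarrow> submodule X H ip \<Gamma> N \<and>
     (\<forall>(f::nat \<Rightarrow> 'x \<Rightarrow> 'i vec) m. (\<forall>n. f n \<in> N) \<and> m \<in> C0_sections X H ip \<Gamma> \<and>
        (\<forall>e>0. \<exists>k. \<forall>n\<ge>k. \<forall>x\<in>topspace X. hnorm (ip x) (vsub (f n x) (m x)) \<le> e)
        \<longrightarrow> m \<in> N)"

definition essential_submodule ::
  "'x topology \<Rightarrow> ('x \<Rightarrow> 'i vec set) \<Rightarrow> ('x \<Rightarrow> 'i vec \<Rightarrow> 'i vec \<Rightarrow> complex) \<Rightarrow> ('x \<Rightarrow> 'i vec) set \<Rightarrow> ('x \<Rightarrow> 'i vec) set \<Rightarrow> bool" where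
  "essential_submodule X H ip \<Gamma> N \<longleftrightarrow>
     (\<forall>K. submodule X H ip \<Gamma> K \<and> K \<noteq> {zero_section} \<longrightarrow> N \<inter> K \<noteq> {zero_section})"

definition fibre_closure ::
  "('x \<Rightarrow> 'i vec set) \<Rightarrow> ('x \<Rightarrow> 'i vec \<Rightarrow> 'i vec \<Rightarrow> complex) \<Rightarrow> ('x \<Rightarrow> 'i vec) set \<Rightarrow> 'x \<Rightarrow> 'i vec set" where
  "fibre_closure H ip N x = {v\<in>H x. \<forall>e>0. \<exists>n\<in>N. hnorm (ip x) (vsub v (n x)) < e}"

definition nowhere_dense_in :: "'x topology \<Rightarrow> 'x set \<Rightarrow> bool" where
  "nowhere_dense_in X Y \<longleftrightarrow> X interior_of (X closure_of Y) = {}"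

end

theory Submission
  imports Defs
begin


lemma vsub_alt: "vsub u v = vadd u (vsmul (-1) v)"
  by (simp add: vsub_def vadd_def vsmul_def)

lemma vsmul_zero_left: "vsmul 0 v = vzero" by (simp add: vsmul_def vzero_def)
lemma vsmul_vzero: "vsmul c vzero = vzero" by (simp add: vsmul_def vzero_def)
lemma vsmul_one: "vsmul 1 v = v" by (simp add: vsmul_def)
lemma vsub_self: "vsub v v = vzero" by (simp add: vsub_def vzero_def)

context
  fixes V and ip :: "'i vec \<Rightarrow> 'i vec \<Rightarrow> complex"
  assumes H: "complex_hilbert_space V ip"
begin

lemma hs_zero: "vzero \<in> V" using H unfolding complex_hilbert_space_def by blast
lemma hs_add: "u \<in> V \<Longrightarrow> v \<in> V \<Longrightarrow> vadd u v \<in> V" using H unfolding complex_hilbert_space_def by blast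
lemma hs_smul: "v \<in> V \<Longrightarrow> vsmul c v \<in> V" using H unfolding complex_hilbert_space_def by blast
lemma hs_sub: "u \<in> V \<Longrightarrow> v \<in> V \<Longrightarrow> vsub u v \<in> V" by (simp add: vsub_alt hs_add hs_smul)
lemma ip_add1: "u \<in> V \<Longrightarrow> v \<in> V \<Longrightarrow> w \<in> V \<Longrightarrow> ip (vadd u v) w = ip u w + ip v w"
  using H unfolding complex_hilbert_space_def by blast
lemma ip_smul1: "u \<in> V \<Longrightarrow> w \<in> V \<Longrightarrow> ip (vsmul c u) w = c * ip u w"
  using H unfolding complex_hilbert_space_def by blast
lemma ip_sym: "u \<in> V \<Longrightarrow> v \<in> V \<Longrightarrow> ip v u = cnj (ip u v)"
  using H unfolding complex_hilbert_space_def by blast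
lemma ip_pos: "u \<in> V \<Longrightarrow> 0 \<le> Re (ip u u)"
  using H unfolding complex_hilbert_space_def by blast
lemma ip_def0: "u \<in> V \<Longrightarrow> ip u u = 0 \<Longrightarrow> u = vzero"
  using H unfolding complex_hilbert_space_def by blast

lemma ip_add2: "u \<in> V \<Longrightarrow> v \<in> V \<Longrightarrow> w \<in> V \<Longrightarrow> ip w (vadd u v) = ip w u + ip w v"
proof -
  assume a: "u \<in> V" "v \<in> V" "w \<in> V"
  have "ip w (vadd u v) = cnj (ip (vadd u v) w)" using ip_sym[OF hs_add[OF a(1,2)] a(3)] .
  also have "\<dots> = cnj (ip u w) + cnj (ip v w)" using a by (simp add: ip_add1)
  also have "\<dots> = ip w u + ip w v" using ip_sym[OF a(1) a(3)] ip_sym[OF a(2) a(3)] by simp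
  finally show ?thesis .
qed

lemma ip_smul2: "u \<in> V \<Longrightarrow> w \<in> V \<Longrightarrow> ip w (vsmul c u) = cnj c * ip w u"
proof -
  assume a: "u \<in> V" "w \<in> V"
  have "ip w (vsmul c u) = cnj (ip (vsmul c u) w)" using ip_sym[OF hs_smul[OF a(1)] a(2)] .
  also have "\<dots> = cnj c * cnj (ip u w)" using a by (simp add: ip_smul1)
  also have "\<dots> = cnj c * ip w u" using ip_sym[OF a(1) a(2)] by simp
  finally show ?thesis .
qed

lemma ip_real: "u \<in> V \<Longrightarrow> ip u u = complex_of_real (Re (ip u u))"
proof -
  assume a: "u \<in> V"
  have "ip u u = cnj (ip u u)" using ip_sym[OF a a] .
  then have "Im (ip u u) = Im (cnj (ip u u))" by (rule arg_cong)
  then have "Im (ip u u) = 0" by simp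
  then show ?thesis by (simp add: complex_eq_iff)
qed

lemma ip_zero1: "w \<in> V \<Longrightarrow> ip vzero w = 0"
  using ip_smul1[OF hs_zero, of w 0] by (simp add: vsmul_zero_left)

lemma ip_zero2: "w \<in> V \<Longrightarrow> ip w vzero = 0"
  using ip_sym[OF hs_zero, of w] ip_zero1 by simp

lemma hnorm_zero: "hnorm ip vzero = 0"
  by (simp add: hnorm_def ip_zero1 hs_zero)

lemma hnorm_nonneg: "v \<in> V \<Longrightarrow> 0 \<le> hnorm ip v" by (simp add: hnorm_def ip_pos)

lemma hnorm_eq0: "v \<in> V \<Longrightarrow> hnorm ip v = 0 \<longleftrightarrow> v = vzero"
proof
  assume a: "v \<in> V" "hnorm ip v = 0"
  then have "Re (ip v v) = 0" using ip_pos[OF a(1)] by (simp add: hnorm_def)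
  then have "ip v v = 0" using ip_real[OF a(1)] by simp
  then show "v = vzero" using ip_def0 a(1) by simp
qed (simp add: hnorm_zero)

lemma hnorm_sq: "v \<in> V \<Longrightarrow> (hnorm ip v)^2 = Re (ip v v)"
  by (simp add: hnorm_def ip_pos)

lemma hnorm_smul: "v \<in> V \<Longrightarrow> hnorm ip (vsmul c v) = cmod c * hnorm ip v"
proof -
  assume a: "v \<in> V"
  have "ip (vsmul c v) (vsmul c v) = c * cnj c * ip v v"
    using a by (simp add: ip_smul1 ip_smul2 hs_smul)
  also have "\<dots> = complex_of_real ((cmod c)^2 * Re (ip v v))"
  proof -
    have cc: "c * cnj c = complex_of_real ((cmod c)^2)" by (metis complex_norm_square)
    show ?thesis by (subst ip_real[OF a]) (simp add: cc)
  qed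
  finally have "Re (ip (vsmul c v) (vsmul c v)) = (cmod c)^2 * Re (ip v v)" by simp
  then show ?thesis by (simp add: hnorm_def real_sqrt_mult)
qed

lemma cauchy_schwarz: "u \<in> V \<Longrightarrow> v \<in> V \<Longrightarrow> cmod (ip u v) \<le> hnorm ip u * hnorm ip v"
proof -
  assume u: "u \<in> V" and v: "v \<in> V"
  define A where "A = Re (ip u u)"
  define B where "B = Re (ip v v)"
  define p where "p = ip u v"
  have A0: "0 \<le> A" using ip_pos[OF u] by (simp add: A_def)
  have B0: "0 \<le> B" using ip_pos[OF v] by (simp add: B_def)
  show ?thesis
  proof (cases "B = 0")
    case True
    then have "ip v v = 0" using ip_real[OF v] by (simp add: B_def)
    then have "v = vzero" using ip_def0[OF v] by simp
    then show ?thesis using ip_zero2[OF u] hnorm_nonneg[OF u] by (simp add: hnorm_zero)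
  next
    case False
    then have Bp: "B > 0" using B0 by simp
    define s where "s = - p / complex_of_real B"
    define w where "w = vadd u (vsmul s v)"
    have ivu: "ip v u = cnj p" using ip_sym[OF u v] by (simp add: p_def)
    have ivv: "ip v v = complex_of_real B" using ip_real[OF v] by (simp add: B_def)
    have iuu: "ip u u = complex_of_real A" using ip_real[OF u] by (simp add: A_def)
    have sv: "vsmul s v \<in> V" using v by (rule hs_smul)
    have wV: "w \<in> V" unfolding w_def using u sv by (rule hs_add)
    have w1: "ip w w = ip u w + s * ip v w"
    proof -
      have "ip (vadd u (vsmul s v)) w = ip u w + ip (vsmul s v) w" by (rule ip_add1[OF u sv wV])
      also have "\<dots> = ip u w + s * ip v w" using ip_smul1[OF v wV] by simp
      finally show ?thesis by (simp only: w_def[symmetric])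
    qed
    have w2: "ip u w = ip u u + cnj s * p"
      unfolding w_def using u sv v by (simp add: ip_add2 ip_smul2 p_def)
    have w3: "ip v w = cnj p + cnj s * ip v v"
      unfolding w_def using u sv v by (simp add: ip_add2 ip_smul2 ivu)
    have "ip w w = ip u u + cnj s * p + s * cnj p + s * cnj s * ip v v"
      unfolding w1 w2 w3 by (simp add: distrib_left mult.assoc)
    also have "\<dots> = complex_of_real (A - (cmod p)^2 / B)"
    proof -
      have pp: "p * cnj p = complex_of_real ((cmod p)^2)" by (metis complex_norm_square)
      have Bc: "complex_of_real B \<noteq> 0" using Bp by simp
      have cs: "cnj s = - cnj p / complex_of_real B" by (simp add: s_def)
      have e1: "cnj s * p = - (p * cnj p) / complex_of_real B"
        unfolding cs by (simp add: mult.commute)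
      have e2: "s * cnj p = - (p * cnj p) / complex_of_real B"
        unfolding s_def by simp
      have e3: "s * cnj s * ip v v = (p * cnj p) / complex_of_real B"
        unfolding cs ivv unfolding s_def using Bc by (simp add: power2_eq_square)
      define q where "q = (cmod p)^2"
      have pq: "p * cnj p = complex_of_real q" unfolding q_def by (rule pp)
      have "complex_of_real A + - complex_of_real q / complex_of_real B + - complex_of_real q / complex_of_real B
             + complex_of_real q / complex_of_real B = complex_of_real (A - q / B)"
        by (simp add: of_real_diff of_real_divide)
      then show ?thesis unfolding iuu e1 e2 e3 pq q_def[symmetric] by simp
    qed
    finally have eqw: "ip w w = complex_of_real (A - (cmod p)^2 / B)" .
    have "0 \<le> A - (cmod p)^2 / B" using ip_pos[OF wV] unfolding eqw by simp
    then have "(cmod p)^2 / B \<le> A" by linarith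
    then have "(cmod p)^2 \<le> A * B" using Bp by (simp add: pos_divide_le_eq)
    then have "cmod p \<le> sqrt (A * B)" by (simp add: real_le_rsqrt)
    then show ?thesis by (simp add: hnorm_def A_def B_def p_def real_sqrt_mult)
  qed
qed

lemma hnorm_triangle: "u \<in> V \<Longrightarrow> v \<in> V \<Longrightarrow> hnorm ip (vadd u v) \<le> hnorm ip u + hnorm ip v"
proof -
  assume u: "u \<in> V" and v: "v \<in> V"
  have "Re (ip (vadd u v) (vadd u v)) = Re (ip u u) + Re (ip v v) + Re (ip u v) + Re (ip v u)"
    using u v by (simp add: ip_add1 ip_add2 hs_add)
  also have "Re (ip v u) = Re (ip u v)" using ip_sym[OF u v] by simp
  also have "Re (ip u v) \<le> cmod (ip u v)" by (rule complex_Re_le_cmod)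
  also have "\<dots> \<le> hnorm ip u * hnorm ip v" by (rule cauchy_schwarz[OF u v])
  finally have "(hnorm ip (vadd u v))^2 \<le> (hnorm ip u + hnorm ip v)^2"
    using u v hs_add by (simp add: hnorm_sq power2_sum)
  then show ?thesis
    by (rule power2_le_imp_le) (use hnorm_nonneg[OF u] hnorm_nonneg[OF v] in linarith)
qed

end


lemma bump:
  assumes "locally_compact_space X" "Hausdorff_space X" "openin X W" "x0 \<in> W"
  obtains f :: "'x \<Rightarrow> real" and C where "continuous_map X euclideanreal f"
    "\<forall>x\<in>topspace X. 0 \<le> f x \<and> f x \<le> 1" "f x0 = 1" "compactin X C" "C \<subseteq> W"
    "\<forall>x\<in>topspace X. x \<notin> C \<longrightarrow> f x = 0"
proof -
  have reg: "regular_space X"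
    using assms locally_compact_Hausdorff_imp_regular_space by blast
  have "neighbourhood_base_of (\<lambda>C. compactin X C \<and> closedin X C) X"
    using assms(1) reg locally_compact_regular_space_neighbourhood_base by blast
  then obtain U C where UC: "openin X U" "compactin X C" "x0 \<in> U" "U \<subseteq> C" "C \<subseteq> W"
    using assms(3,4) unfolding neighbourhood_base_of by metis
  have cr: "completely_regular_space X"
    using assms locally_compact_regular_imp_completely_regular_space by blast
  have x0: "x0 \<in> topspace X" using UC openin_subset by blast
  obtain f where f: "continuous_map X (subtopology euclidean {0..1::real}) f"
     "f ` (topspace X - U) \<subseteq> {0}" "f ` {x0} \<subseteq> {1}"
    using Urysohn_completely_regular_compact_closed[of 0 1 X "{x0}" "topspace X - U"]
      cr x0 UC by (auto simp: disjnt_def)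
  have fc: "continuous_map X euclideanreal f" using f(1) continuous_map_in_subtopology by blast
  have "\<forall>x\<in>topspace X. 0 \<le> f x \<and> f x \<le> 1"
    using f(1) by (auto simp: continuous_map_in_subtopology)
  moreover have "\<forall>x\<in>topspace X. x \<notin> C \<longrightarrow> f x = 0" using f(2) UC by auto
  ultimately show ?thesis using that fc f(3) UC by auto
qed

lemma C0_real:
  assumes "continuous_map X euclideanreal f" "compactin X C"
    "\<forall>x\<in>topspace X. x \<notin> C \<longrightarrow> f x = 0"
  shows "(\<lambda>x. complex_of_real (f x)) \<in> C0_functions X"
proof -
  have "continuous_map X euclidean (\<lambda>x. complex_of_real (f x))"
    using continuous_map_compose[OF assms(1), of euclidean complex_of_real]
    by (simp add: o_def continuous_on_of_real continuous_on_id)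
  moreover have "compactin X {x \<in> topspace X. e \<le> norm (complex_of_real (f x))}" if "e > 0" for e
  proof (rule closed_compactin[OF assms(2)])
    show "{x \<in> topspace X. e \<le> norm (complex_of_real (f x))} \<subseteq> C" using assms(3) that by force
    have "closedin X {x \<in> topspace X. \<bar>f x\<bar> \<in> {e..}}"
      by (rule closedin_continuous_map_preimage) (auto intro: continuous_intros assms(1))
    then show "closedin X {x \<in> topspace X. e \<le> norm (complex_of_real (f x))}" by simp
  qed
  ultimately show ?thesis by (simp add: C0_functions_def)
qed



lemma vsub_smul_same: "vsub (vsmul a v) (vsmul c v) = vsmul (a - c) v"
  by (rule ext) (simp add: vsub_def vsmul_def algebra_simps)

lemma vsmul_vsmul: "vsmul a (vsmul c v) = vsmul (a * c) v"
  by (rule ext) (simp add: vsmul_def)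

lemma vsub_swap: "vsub a b = vsmul (-1) (vsub b a)"
  by (rule ext) (simp add: vsub_def vsmul_def)

lemma cmult_cont:
  fixes f g :: "'a \<Rightarrow> complex"
  shows "continuous_map X euclidean f \<Longrightarrow> continuous_map X euclidean g \<Longrightarrow>
     continuous_map X euclidean (\<lambda>x. f x * g x)"
  by (simp add: continuous_map_atin tendsto_mult)

lemma of_real_cont:
  "continuous_map X euclideanreal f \<Longrightarrow> continuous_map X euclidean (\<lambda>x. complex_of_real (f x))"
  using continuous_map_compose[of X euclideanreal f euclidean complex_of_real]
  by (simp add: o_def continuous_on_of_real continuous_on_id)

context
  fixes X :: "'x topology" and H :: "'x \<Rightarrow> 'i vec set"
    and ip :: "'x \<Rightarrow> 'i vec \<Rightarrow> 'i vec \<Rightarrow> complex" and \<Gamma> :: "('x \<Rightarrow> 'i vec) set"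
  assumes CF: "continuous_field X H ip \<Gamma>"
begin

lemmas cfd = CF[unfolded continuous_field_def]
lemma cf_hs: "x \<in> topspace X \<Longrightarrow> complex_hilbert_space (H x) (ip x)"
  using conjunct1[OF cfd] by blast
lemma cf_sec: "s \<in> \<Gamma> \<Longrightarrow> is_section X H s"
  using conjunct1[OF conjunct2[OF cfd]] by blast
lemma cf_zero: "zero_section \<in> \<Gamma>"
  using conjunct1[OF conjunct2[OF conjunct2[OF cfd]]] by blast
lemma cf_add: "s \<in> \<Gamma> \<Longrightarrow> t \<in> \<Gamma> \<Longrightarrow> (\<lambda>x. vadd (s x) (t x)) \<in> \<Gamma>"
  using conjunct1[OF conjunct2[OF conjunct2[OF conjunct2[OF cfd]]]] by blast
lemma cf_smul: "s \<in> \<Gamma> \<Longrightarrow> (\<lambda>x. vsmul c (s x)) \<in> \<Gamma>"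
  using conjunct1[OF conjunct2[OF conjunct2[OF conjunct2[OF conjunct2[OF cfd]]]]] by blast
lemma cf_cont: "s \<in> \<Gamma> \<Longrightarrow> continuous_map X euclideanreal (\<lambda>x. hnorm (ip x) (s x))"
  using conjunct1[OF conjunct2[OF conjunct2[OF conjunct2[OF conjunct2[OF conjunct2[OF conjunct2[OF cfd]]]]]]] by blast
lemmas cf_loc_obj = conjunct2[OF conjunct2[OF conjunct2[OF conjunct2[OF conjunct2[OF conjunct2[OF conjunct2[OF cfd]]]]]]]
lemma cf_loc:
  assumes "is_section X H t"
    "\<And>x e. x \<in> topspace X \<Longrightarrow> e > 0 \<Longrightarrow> \<exists>s\<in>\<Gamma>. \<exists>U. openin X U \<and> x \<in> U \<and>
               (\<forall>y\<in>U. hnorm (ip y) (vsub (t y) (s y)) \<le> e)"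
  shows "t \<in> \<Gamma>"
proof -
  have "\<forall>x\<in>topspace X. \<forall>e>0. \<exists>s\<in>\<Gamma>. \<exists>U. openin X U \<and> x \<in> U \<and>
               (\<forall>y\<in>U. hnorm (ip y) (vsub (t y) (s y)) \<le> e)" using assms(2) by blast
  with assms(1) show ?thesis using cf_loc_obj by blast
qed

lemma cf_sub: "s \<in> \<Gamma> \<Longrightarrow> t \<in> \<Gamma> \<Longrightarrow> (\<lambda>x. vsub (s x) (t x)) \<in> \<Gamma>"
  unfolding vsub_alt by (intro cf_add cf_smul)

lemma sec_in: "s \<in> \<Gamma> \<Longrightarrow> x \<in> topspace X \<Longrightarrow> s x \<in> H x"
  using cf_sec unfolding is_section_def by blast
lemma sec_out: "s \<in> \<Gamma> \<Longrightarrow> x \<notin> topspace X \<Longrightarrow> s x = vzero"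
  using cf_sec unfolding is_section_def by blast

lemma ract_Gamma:
  assumes s: "s \<in> \<Gamma>" and b: "continuous_map X euclidean b"
  shows "ract s b \<in> \<Gamma>"
proof (rule cf_loc)
  show "is_section X H (ract s b)"
    unfolding is_section_def ract_def
  proof (intro allI conjI impI)
    fix x assume x: "x \<in> topspace X"
    show "vsmul (b x) (s x) \<in> H x" by (rule hs_smul[OF cf_hs[OF x] sec_in[OF s x]])
  next
    fix x assume x: "x \<notin> topspace X"
    show "vsmul (b x) (s x) = vzero" by (simp add: sec_out[OF s x] vsmul_vzero)
  qed
next
  fix x0 :: 'x and e :: real
  assume x0: "x0 \<in> topspace X" and e: "e > 0"
  define g where "g y = cmod (b y - b x0) * hnorm (ip y) (s y)" for y
  have gc: "continuous_map X euclideanreal g"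
    unfolding g_def
    by (intro continuous_map_real_mult continuous_map_norm continuous_map_diff b cf_cont[OF s]
        continuous_map_canonical_const)
  define U where "U = {y \<in> topspace X. g y \<in> {..<e}}"
  have Uo: "openin X U" unfolding U_def
    by (rule openin_continuous_map_preimage[OF gc]) simp
  have x0U: "x0 \<in> U" using x0 e by (simp add: U_def g_def)
  have Ub: "\<forall>y\<in>U. hnorm (ip y) (vsub (ract s b y) (vsmul (b x0) (s y))) \<le> e"
  proof
    fix y assume y: "y \<in> U"
    then have yt: "y \<in> topspace X" by (simp add: U_def)
    have "hnorm (ip y) (vsub (ract s b y) (vsmul (b x0) (s y))) = g y"
      unfolding ract_def vsub_smul_same g_def
      by (rule hnorm_smul[OF cf_hs[OF yt] sec_in[OF s yt]])
    then show "hnorm (ip y) (vsub (ract s b y) (vsmul (b x0) (s y))) \<le> e"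
      using y by (simp add: U_def)
  qed
  show "\<exists>s'\<in>\<Gamma>. \<exists>U. openin X U \<and> x0 \<in> U \<and>
               (\<forall>y\<in>U. hnorm (ip y) (vsub (ract s b y) (s' y)) \<le> e)"
    using cf_smul[OF s, of "b x0"] Uo x0U Ub by (intro bexI[of _ "\<lambda>y. vsmul (b x0) (s y)"] exI[of _ U]) auto
qed

lemma C0_of_compact:
  assumes s: "s \<in> \<Gamma>" and C: "compactin X C"
    and z: "\<forall>x\<in>topspace X. x \<notin> C \<longrightarrow> s x = vzero"
  shows "s \<in> C0_sections X H ip \<Gamma>"
  unfolding C0_sections_def
proof (intro CollectI conjI allI impI s)
  fix e :: real assume e: "e > 0"
  show "compactin X {x \<in> topspace X. e \<le> hnorm (ip x) (s x)}"
  proof (rule closed_compactin[OF C])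
    show "{x \<in> topspace X. e \<le> hnorm (ip x) (s x)} \<subseteq> C"
      using z e hnorm_zero[OF cf_hs] by force
    have "closedin X {x \<in> topspace X. hnorm (ip x) (s x) \<in> {e..}}"
      by (rule closedin_continuous_map_preimage[OF cf_cont[OF s]]) simp
    then show "closedin X {x \<in> topspace X. e \<le> hnorm (ip x) (s x)}" by simp
  qed
qed

end


lemma hnorm_sum:
  assumes H: "complex_hilbert_space V ip" and P: "finite P"
  shows "(\<forall>x\<in>P. w x \<in> V) \<Longrightarrow> (\<lambda>i. \<Sum>x\<in>P. w x i) \<in> V \<and> hnorm ip (\<lambda>i. \<Sum>x\<in>P. w x i) \<le> (\<Sum>x\<in>P. hnorm ip (w x))"
  using P
proof (induction P rule: finite_induct)
  case empty
  have "(\<lambda>i. \<Sum>x\<in>{}. w x i) = vzero" by (simp add: vzero_def)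
  then show ?case using hs_zero[OF H] hnorm_zero[OF H] by simp
next
  case (insert x F)
  have eq: "(\<lambda>i. \<Sum>x\<in>insert x F. w x i) = vadd (w x) (\<lambda>i. \<Sum>x\<in>F. w x i)"
    using insert.hyps by (simp add: vadd_def)
  have wx: "w x \<in> V" using insert.prems by simp
  have IH: "(\<lambda>i. \<Sum>x\<in>F. w x i) \<in> V \<and> hnorm ip (\<lambda>i. \<Sum>x\<in>F. w x i) \<le> (\<Sum>x\<in>F. hnorm ip (w x))"
    using insert.IH insert.prems by simp
  have "hnorm ip (vadd (w x) (\<lambda>i. \<Sum>x\<in>F. w x i)) \<le> hnorm ip (w x) + hnorm ip (\<lambda>i. \<Sum>x\<in>F. w x i)"
    using hnorm_triangle[OF H wx] IH by blast
  also have "\<dots> \<le> hnorm ip (w x) + (\<Sum>x\<in>F. hnorm ip (w x))" using IH by simp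
  finally show ?case unfolding eq using insert.hyps hs_add[OF H wx] IH by simp
qed

context
  fixes X :: "'x topology" and H :: "'x \<Rightarrow> 'i vec set"
    and ip :: "'x \<Rightarrow> 'i vec \<Rightarrow> 'i vec \<Rightarrow> complex" and \<Gamma> :: "('x \<Rightarrow> 'i vec) set"
    and N :: "('x \<Rightarrow> 'i vec) set"
  assumes CF: "continuous_field X H ip \<Gamma>"
    and CS: "closed_submodule X H ip \<Gamma> N"
begin

lemmas csd = CS[unfolded closed_submodule_def submodule_def]

lemma N_C0: "n \<in> N \<Longrightarrow> n \<in> C0_sections X H ip \<Gamma>"
  using conjunct1[OF conjunct1[OF csd]] by blast
lemma N_Gamma: "n \<in> N \<Longrightarrow> n \<in> \<Gamma>"
  using N_C0 unfolding C0_sections_def by blast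
lemma N_zero: "zero_section \<in> N"
  using conjunct1[OF conjunct2[OF conjunct1[OF csd]]] by blast
lemma N_add: "s \<in> N \<Longrightarrow> t \<in> N \<Longrightarrow> (\<lambda>x. vadd (s x) (t x)) \<in> N"
  using conjunct1[OF conjunct2[OF conjunct2[OF conjunct1[OF csd]]]] by blast
lemma N_smul: "s \<in> N \<Longrightarrow> (\<lambda>x. vsmul c (s x)) \<in> N"
  using conjunct1[OF conjunct2[OF conjunct2[OF conjunct2[OF conjunct1[OF csd]]]]] by blast
lemma N_ract: "s \<in> N \<Longrightarrow> a \<in> C0_functions X \<Longrightarrow> ract s a \<in> N"
  using conjunct2[OF conjunct2[OF conjunct2[OF conjunct2[OF conjunct1[OF csd]]]]] by blast
lemmas N_closed_obj = conjunct2[OF csd]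
lemma N_closed:
  fixes g :: "nat \<Rightarrow> 'x \<Rightarrow> 'i vec"
  assumes "\<And>j. g j \<in> N" "m \<in> C0_sections X H ip \<Gamma>"
    "\<And>e. e > 0 \<Longrightarrow> \<exists>k. \<forall>n\<ge>k. \<forall>x\<in>topspace X. hnorm (ip x) (vsub (g n x) (m x)) \<le> e"
  shows "m \<in> N"
proof -
  have "(\<forall>n. g n \<in> N) \<and> m \<in> C0_sections X H ip \<Gamma> \<and>
        (\<forall>e>0. \<exists>k. \<forall>n\<ge>k. \<forall>x\<in>topspace X. hnorm (ip x) (vsub (g n x) (m x)) \<le> e)"
    using assms by blast
  then show ?thesis by (rule mp[OF spec[OF spec[OF N_closed_obj, of g], of m]])
qed

lemma FC1: "n \<in> N \<Longrightarrow> x \<in> topspace X \<Longrightarrow> n x \<in> fibre_closure H ip N x"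
proof -
  assume n: "n \<in> N" and x: "x \<in> topspace X"
  have "n x \<in> H x" by (rule sec_in[OF CF N_Gamma[OF n] x])
  moreover have "\<forall>e>0. \<exists>n'\<in>N. hnorm (ip x) (vsub (n x) (n' x)) < e"
  proof (intro allI impI)
    fix e :: real assume "e > 0"
    then show "\<exists>n'\<in>N. hnorm (ip x) (vsub (n x) (n' x)) < e"
      using n by (intro bexI[of _ n]) (simp_all add: vsub_self hnorm_zero[OF cf_hs[OF CF x]])
  qed
  ultimately show ?thesis unfolding fibre_closure_def by blast
qed

lemma N_sum:
  assumes P: "finite P"
  shows "(\<forall>x\<in>P. nn x \<in> N \<and> cc x \<in> C0_functions X) \<Longrightarrow> (\<lambda>y i. \<Sum>x\<in>P. cc x y * nn x y i) \<in> N"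
  using P
proof (induction P rule: finite_induct)
  case empty
  have "(\<lambda>y i. \<Sum>x\<in>{}. cc x y * nn x y i) = zero_section" by (simp add: zero_section_def vzero_def)
  then show ?case using N_zero by simp
next
  case (insert x F)
  have eq: "(\<lambda>y i. \<Sum>x\<in>insert x F. cc x y * nn x y i)
     = (\<lambda>y. vadd (ract (nn x) (cc x) y) ((\<lambda>y i. \<Sum>x\<in>F. cc x y * nn x y i) y))"
    using insert.hyps by (simp add: vadd_def ract_def vsmul_def)
  have "ract (nn x) (cc x) \<in> N" using insert.prems N_ract by simp
  moreover have "(\<lambda>y i. \<Sum>x\<in>F. cc x y * nn x y i) \<in> N" using insert.IH insert.prems by simp
  ultimately show ?case unfolding eq by (rule N_add)
qed

end


context
  fixes X :: "'x topology" and H :: "'x \<Rightarrow> 'i vec set"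
    and ip :: "'x \<Rightarrow> 'i vec \<Rightarrow> 'i vec \<Rightarrow> complex" and \<Gamma> :: "('x \<Rightarrow> 'i vec) set"
    and N :: "('x \<Rightarrow> 'i vec) set"
  assumes CF: "continuous_field X H ip \<Gamma>"
    and CS: "closed_submodule X H ip \<Gamma> N"
    and LC: "locally_compact_space X" and HS: "Hausdorff_space X"
begin

lemma approx:
  assumes k: "k \<in> \<Gamma>" and fc: "continuous_map X euclideanreal f"
    and f01: "\<forall>x\<in>topspace X. 0 \<le> f x \<and> f x \<le> 1"
    and C: "compactin X C" and f0: "\<forall>x\<in>topspace X. x \<notin> C \<longrightarrow> f x = 0"
    and kL: "\<forall>x\<in>C. k x \<in> fibre_closure H ip N x" and ep: "\<epsilon> > 0"
  shows "\<exists>g\<in>N. \<forall>y\<in>topspace X. hnorm (ip y) (vsub (g y) (ract k (\<lambda>x. complex_of_real (f x)) y)) \<le> \<epsilon>"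
proof -
  have Ct: "C \<subseteq> topspace X" using C by (rule compactin_subset_topspace)
  have ex1: "\<forall>x\<in>C. \<exists>n. n \<in> N \<and> hnorm (ip x) (vsub (k x) (n x)) < \<epsilon>"
    using kL ep unfolding fibre_closure_def by blast
  obtain nn where nn: "\<forall>x\<in>C. nn x \<in> N \<and> hnorm (ip x) (vsub (k x) (nn x x)) < \<epsilon>"
    using bchoice[OF ex1] by blast
  define U where "U x = {y \<in> topspace X. hnorm (ip y) (vsub (k y) (nn x y)) \<in> {..<\<epsilon>}}" for x
  have Uo: "openin X (U x)" if "x \<in> C" for x
    unfolding U_def
    by (rule openin_continuous_map_preimage[OF cf_cont[OF CF cf_sub[OF CF k N_Gamma[OF CF CS]]]])
       (use nn that in auto)
  have xU: "x \<in> U x" if "x \<in> C" for x using nn that Ct by (auto simp: U_def)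
  have ex2: "\<forall>x\<in>C. \<exists>\<psi>. continuous_map X euclideanreal \<psi> \<and> (\<forall>y\<in>topspace X. 0 \<le> \<psi> y \<and> \<psi> y \<le> 1)
          \<and> \<psi> x = 1 \<and> (\<forall>y\<in>topspace X. y \<notin> U x \<longrightarrow> \<psi> y = 0)"
  proof
    fix x assume x: "x \<in> C"
    obtain \<psi> Cx where p: "continuous_map X euclideanreal \<psi>"
      "\<forall>y\<in>topspace X. 0 \<le> \<psi> y \<and> \<psi> y \<le> 1" "\<psi> x = 1" "compactin X Cx" "Cx \<subseteq> U x"
      "\<forall>y\<in>topspace X. y \<notin> Cx \<longrightarrow> \<psi> y = 0"
      using bump[OF LC HS Uo[OF x] xU[OF x]] by metis
    show "\<exists>\<psi>. continuous_map X euclideanreal \<psi> \<and> (\<forall>y\<in>topspace X. 0 \<le> \<psi> y \<and> \<psi> y \<le> 1)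
          \<and> \<psi> x = 1 \<and> (\<forall>y\<in>topspace X. y \<notin> U x \<longrightarrow> \<psi> y = 0)"
      using p by (intro exI[of _ \<psi>]) blast
  qed
  obtain psi where psi: "\<forall>x\<in>C. continuous_map X euclideanreal (psi x) \<and> (\<forall>y\<in>topspace X. 0 \<le> psi x y \<and> psi x y \<le> 1)
          \<and> psi x x = 1 \<and> (\<forall>y\<in>topspace X. y \<notin> U x \<longrightarrow> psi x y = 0)"
    using bchoice[OF ex2] by blast
  define V where "V x = {y \<in> topspace X. psi x y \<in> {1/2<..}}" for x
  have Vo: "openin X (V x)" if "x \<in> C" for x
    unfolding V_def by (rule openin_continuous_map_preimage) (use psi that in auto)
  have "C \<subseteq> \<Union> (V ` C)" using psi Ct by (auto simp: V_def)
  then obtain F where F: "finite F" "F \<subseteq> V ` C" "C \<subseteq> \<Union> F"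
    using C Vo unfolding compactin_def by (metis (no_types, lifting) imageE)
  then obtain P where P: "P \<subseteq> C" "finite P" "F = V ` P"
    using finite_subset_image[OF F(1,2)] by blast
  have PC: "\<And>x. x \<in> P \<Longrightarrow> x \<in> C" using P by blast
  define S where "S y = (\<Sum>x\<in>P. psi x y)" for y
  define D where "D y = max (S y) (1/2)" for y
  define cf where "cf x y = f y * psi x y / D y" for x y
  have Dpos: "D y > 0" for y by (simp add: D_def)
  have Dne: "D y \<noteq> 0" for y using Dpos[of y] by simp
  have Sc: "continuous_map X euclideanreal S"
    unfolding S_def by (intro continuous_map_sum P(2)) (use psi PC in blast)
  have Dc: "continuous_map X euclideanreal D"
    unfolding D_def by (intro continuous_map_real_max Sc continuous_map_canonical_const)
  have cfc: "continuous_map X euclideanreal (cf x)" if "x \<in> P" for x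
    unfolding cf_def
    by (intro continuous_map_real_divide continuous_map_real_mult fc Dc)
       (use psi PC[OF that] in \<open>auto simp: Dne\<close>)
  have cf0: "\<forall>y\<in>topspace X. y \<notin> C \<longrightarrow> cf x y = 0" for x using f0 by (simp add: cf_def)
  have ccC0: "(\<lambda>y. complex_of_real (cf x y)) \<in> C0_functions X" if "x \<in> P" for x
    by (rule C0_real[OF cfc[OF that] C cf0])
  define g where "g = (\<lambda>y i. \<Sum>x\<in>P. complex_of_real (cf x y) * nn x y i)"
  have gN: "g \<in> N" unfolding g_def
    by (rule N_sum[OF CF CS P(2)]) (use ccC0 nn PC in blast)
  have "hnorm (ip y) (vsub (g y) (ract k (\<lambda>x. complex_of_real (f x)) y)) \<le> \<epsilon>"
    if y: "y \<in> topspace X" for y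
  proof (cases "y \<in> C")
    case False
    then have "f y = 0" using f0 y by blast
    then have "vsub (g y) (ract k (\<lambda>x. complex_of_real (f x)) y) = vzero"
      by (simp add: g_def cf_def vsub_def ract_def vsmul_def vzero_def)
    then show ?thesis using hnorm_zero[OF cf_hs[OF CF y]] ep by simp
  next
    case True
    then obtain x1 where x1: "x1 \<in> P" "y \<in> V x1" using F(3) P(3) by blast
    have psinn: "0 \<le> psi x y" if "x \<in> P" for x using psi PC[OF that] y by blast
    have "psi x1 y \<le> S y" unfolding S_def
      by (rule member_le_sum[OF x1(1)]) (use psinn P(2) in auto) 
    moreover have "psi x1 y > 1/2" using x1 by (simp add: V_def)
    ultimately have DS: "D y = S y" and Sp: "S y > 0" by (auto simp: D_def)
    have sumcf: "(\<Sum>x\<in>P. cf x y) = f y"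
      unfolding cf_def DS using Sp by (simp add: sum_divide_distrib[symmetric] sum_distrib_left[symmetric] S_def)
    have cfnn: "0 \<le> cf x y" if "x \<in> P" for x
      unfolding cf_def using psinn[OF that] f01 y Dpos[of y] by simp
    define w where "w x = vsmul (complex_of_real (cf x y)) (vsub (nn x y) (k y))" for x
    have hy: "complex_hilbert_space (H y) (ip y)" by (rule cf_hs[OF CF y])
    have nny: "nn x y \<in> H y" if "x \<in> P" for x
      using sec_in[OF CF N_Gamma[OF CF CS] y] nn PC[OF that] by blast
    have ky: "k y \<in> H y" by (rule sec_in[OF CF k y])
    have wV: "\<forall>x\<in>P. w x \<in> H y" unfolding w_def using hs_smul[OF hy] hs_sub[OF hy] nny ky by blast
    have eq: "vsub (g y) (ract k (\<lambda>x. complex_of_real (f x)) y) = (\<lambda>i. \<Sum>x\<in>P. w x i)"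
    proof
      fix i
      have "(\<Sum>x\<in>P. w x i) = (\<Sum>x\<in>P. complex_of_real (cf x y) * nn x y i) - (\<Sum>x\<in>P. complex_of_real (cf x y)) * k y i"
        by (simp add: w_def vsmul_def vsub_def right_diff_distrib sum_subtractf sum_distrib_right)
      also have "(\<Sum>x\<in>P. complex_of_real (cf x y)) = complex_of_real (f y)"
        by (simp flip: sumcf)
      finally show "vsub (g y) (ract k (\<lambda>x. complex_of_real (f x)) y) i = (\<Sum>x\<in>P. w x i)"
        by (simp add: g_def vsub_def ract_def vsmul_def)
    qed
    have "hnorm (ip y) (\<lambda>i. \<Sum>x\<in>P. w x i) \<le> (\<Sum>x\<in>P. hnorm (ip y) (w x))"
      using hnorm_sum[OF hy P(2) wV] by blast
    also have "\<dots> \<le> (\<Sum>x\<in>P. cf x y * \<epsilon>)"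
    proof (rule sum_mono)
      fix x assume x: "x \<in> P"
      have "hnorm (ip y) (w x) = cf x y * hnorm (ip y) (vsub (nn x y) (k y))"
        unfolding w_def using hnorm_smul[OF hy hs_sub[OF hy nny[OF x] ky]] cfnn[OF x] by simp
      also have "hnorm (ip y) (vsub (nn x y) (k y)) = hnorm (ip y) (vsub (k y) (nn x y))"
        using hnorm_smul[OF hy hs_sub[OF hy ky nny[OF x]], of "-1"] by (simp add: vsub_swap[of "nn x y"])
      finally have hw: "hnorm (ip y) (w x) = cf x y * hnorm (ip y) (vsub (k y) (nn x y))" .
      show "hnorm (ip y) (w x) \<le> cf x y * \<epsilon>"
      proof (cases "psi x y = 0")
        case True
        then show ?thesis unfolding hw by (simp add: cf_def)
      next
        case False
        then have "y \<in> U x" using psi PC[OF x] y by blast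
        then have "hnorm (ip y) (vsub (k y) (nn x y)) \<le> \<epsilon>" by (simp add: U_def)
        then show ?thesis unfolding hw using cfnn[OF x] by (simp add: mult_left_mono)
      qed
    qed
    also have "\<dots> = f y * \<epsilon>" by (simp add: sum_distrib_right[symmetric] sumcf)
    also have "\<dots> \<le> \<epsilon>" using f01 y ep by (simp add: mult_left_le_one_le)
    finally show ?thesis unfolding eq .
  qed
  then show ?thesis using gN by blast
qed

end


lemma loc_in_N:
  assumes CF: "continuous_field X H ip \<Gamma>" and CS: "closed_submodule X H ip \<Gamma> N"
    and LC: "locally_compact_space X" and HS: "Hausdorff_space X"
    and k: "k \<in> \<Gamma>" and fc: "continuous_map X euclideanreal f"
    and f01: "\<forall>x\<in>topspace X. 0 \<le> f x \<and> f x \<le> 1"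
    and C: "compactin X C" and f0: "\<forall>x\<in>topspace X. x \<notin> C \<longrightarrow> f x = 0"
    and kL: "\<forall>x\<in>C. k x \<in> fibre_closure H ip N x"
    and ka: "ract k (\<lambda>x. complex_of_real (f x)) \<in> C0_sections X H ip \<Gamma>"
  shows "ract k (\<lambda>x. complex_of_real (f x)) \<in> N"
proof -
  have ex: "\<forall>j::nat. \<exists>g. g \<in> N \<and> (\<forall>y\<in>topspace X. hnorm (ip y) (vsub (g y) (ract k (\<lambda>x. complex_of_real (f x)) y)) \<le> inverse (real (Suc j)))"
  proof
    fix j :: nat
    have "inverse (real (Suc j)) > 0" by simp
    then show "\<exists>g. g \<in> N \<and> (\<forall>y\<in>topspace X. hnorm (ip y) (vsub (g y) (ract k (\<lambda>x. complex_of_real (f x)) y)) \<le> inverse (real (Suc j)))"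
      using approx[OF CF CS LC HS k fc f01 C f0 kL] by blast
  qed
  obtain gs where gs: "\<forall>j. gs j \<in> N \<and> (\<forall>y\<in>topspace X. hnorm (ip y) (vsub (gs j y) (ract k (\<lambda>x. complex_of_real (f x)) y)) \<le> inverse (real (Suc j)))"
    using choice[OF ex] by blast
  show ?thesis
  proof (rule N_closed[OF CF CS, of gs])
    show "gs j \<in> N" for j using gs by blast
    show "ract k (\<lambda>x. complex_of_real (f x)) \<in> C0_sections X H ip \<Gamma>" by (rule ka)
    fix e :: real assume e: "e > 0"
    obtain K where K: "inverse (real (Suc K)) < e" using reals_Archimedean[OF e] by blast
    have "\<forall>n\<ge>K. \<forall>x\<in>topspace X. hnorm (ip x) (vsub (gs n x) (ract k (\<lambda>x. complex_of_real (f x)) x)) \<le> e"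
    proof (intro allI impI ballI)
      fix n x assume n: "n \<ge> K" and x: "x \<in> topspace X"
      have "inverse (real (Suc n)) \<le> inverse (real (Suc K))" using n by (simp add: le_imp_inverse_le)
      moreover have "hnorm (ip x) (vsub (gs n x) (ract k (\<lambda>x. complex_of_real (f x)) x)) \<le> inverse (real (Suc n))"
        using gs x by blast
      ultimately show "hnorm (ip x) (vsub (gs n x) (ract k (\<lambda>x. complex_of_real (f x)) x)) \<le> e"
        using K by linarith
    qed
    then show "\<exists>K. \<forall>n\<ge>K. \<forall>x\<in>topspace X. hnorm (ip x) (vsub (gs n x) (ract k (\<lambda>x. complex_of_real (f x)) x)) \<le> e"
      by blast
  qed
qed



theorem mainTheorem5:
  fixes X :: "'x topology"
    and H :: "'x \<Rightarrow> 'i vec set"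
    and ip :: "'x \<Rightarrow> 'i vec \<Rightarrow> 'i vec \<Rightarrow> complex"
    and \<Gamma> :: "('x \<Rightarrow> 'i vec) set"
    and N :: "('x \<Rightarrow> 'i vec) set"
  assumes "locally_compact_space X"
    and "Hausdorff_space X"
    and "continuous_field X H ip \<Gamma>"
    and "closed_submodule X H ip \<Gamma> N"
  shows "essential_submodule X H ip \<Gamma> N \<longleftrightarrow>
         (\<forall>m\<in>C0_sections X H ip \<Gamma>.
            nowhere_dense_in X {x\<in>topspace X. m x \<notin> fibre_closure H ip N x})"
proof
  note LC = assms(1) and HS = assms(2) and CF = assms(3) and CS = assms(4)
  assume ess: "essential_submodule X H ip \<Gamma> N"
  show "\<forall>m\<in>C0_sections X H ip \<Gamma>. nowhere_dense_in X {x\<in>topspace X. m x \<notin> fibre_closure H ip N x}"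
  proof (rule ballI, rule ccontr)
    fix m assume m: "m \<in> C0_sections X H ip \<Gamma>"
      and nd: "\<not> nowhere_dense_in X {x\<in>topspace X. m x \<notin> fibre_closure H ip N x}"
    define Z where "Z = {x\<in>topspace X. m x \<notin> fibre_closure H ip N x}"
    define W where "W = X interior_of (X closure_of Z)"
    have Wne: "W \<noteq> {}" using nd by (simp add: nowhere_dense_in_def W_def Z_def)
    have Wo: "openin X W" by (simp add: W_def)
    have WZ: "W \<subseteq> X closure_of Z" unfolding W_def by (rule interior_of_subset)
    obtain x' where x': "x' \<in> W" using Wne by blast
    have "x' \<in> X closure_of Z" using x' WZ by blast
    then obtain x0 where x0: "x0 \<in> Z" "x0 \<in> W" using x' Wo unfolding in_closure_of by blast
    have x0t: "x0 \<in> topspace X" using x0 by (simp add: Z_def)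
    have mG: "m \<in> \<Gamma>" using m by (simp add: C0_sections_def)
    have "zero_section x0 \<in> fibre_closure H ip N x0" by (rule FC1[OF CF CS N_zero[OF CF CS] x0t])
    then have mx0: "m x0 \<noteq> vzero" using x0 by (auto simp: Z_def zero_section_def)
    obtain f C where f: "continuous_map X euclideanreal f"
      "\<forall>x\<in>topspace X. 0 \<le> f x \<and> f x \<le> 1" "f x0 = 1" "compactin X C" "C \<subseteq> W"
      "\<forall>x\<in>topspace X. x \<notin> C \<longrightarrow> f x = 0"
      using bump[OF LC HS Wo x0(2)] by metis
    define a where "a x = complex_of_real (f x)" for x
    have ac: "continuous_map X euclidean a" unfolding a_def by (rule of_real_cont[OF f(1)])
    define k where "k = ract m a"
    have kG: "k \<in> \<Gamma>" unfolding k_def by (rule ract_Gamma[OF CF mG ac])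
    define K where "K = {ract k b | b. continuous_map X euclidean b}"
    have kz: "\<forall>x\<in>topspace X. x \<notin> C \<longrightarrow> k x = vzero"
      using f(6) by (simp add: k_def ract_def a_def vsmul_zero_left)
    have subK: "submodule X H ip \<Gamma> K"
      unfolding submodule_def
    proof (intro conjI ballI allI)
      show "K \<subseteq> C0_sections X H ip \<Gamma>"
      proof
        fix s assume "s \<in> K"
        then obtain b where b: "continuous_map X euclidean b" "s = ract k b" by (auto simp: K_def)
        have "s \<in> \<Gamma>" unfolding b(2) by (rule ract_Gamma[OF CF kG b(1)])
        moreover have "\<forall>x\<in>topspace X. x \<notin> C \<longrightarrow> s x = vzero"
          using kz by (simp add: b(2) ract_def vsmul_vzero)
        ultimately show "s \<in> C0_sections X H ip \<Gamma>" by (rule C0_of_compact[OF CF _ f(4)])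
      qed
      have z0: "zero_section = ract k (\<lambda>x. 0)"
        by (simp add: ract_def zero_section_def vsmul_zero_left)
      have c0: "continuous_map X euclidean (\<lambda>x. 0::complex)" by simp
      show "zero_section \<in> K" unfolding K_def
        by (intro CollectI exI[of _ "\<lambda>x. 0::complex"] conjI z0 c0)
    next
      fix s t assume "s \<in> K" "t \<in> K"
      then obtain b1 b2 where b: "continuous_map X euclidean b1" "s = ract k b1"
        "continuous_map X euclidean b2" "t = ract k b2" by (auto simp: K_def)
      have "(\<lambda>x. vadd (s x) (t x)) = ract k (\<lambda>x. b1 x + b2 x)"
        by (rule ext) (simp add: b(2,4) ract_def vadd_def vsmul_def distrib_right)
      moreover have "continuous_map X euclidean (\<lambda>x. b1 x + b2 x)"
        by (rule continuous_map_add[OF b(1,3)])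
      ultimately show "(\<lambda>x. vadd (s x) (t x)) \<in> K" unfolding K_def by blast
    next
      fix c s assume "s \<in> K"
      then obtain b where b: "continuous_map X euclidean b" "s = ract k b" by (auto simp: K_def)
      have "(\<lambda>x. vsmul c (s x)) = ract k (\<lambda>x. c * b x)"
        by (rule ext) (simp add: b(2) ract_def vsmul_vsmul)
      moreover have "continuous_map X euclidean (\<lambda>x. c * b x)"
        by (rule cmult_cont[OF continuous_map_canonical_const b(1)])
      ultimately show "(\<lambda>x. vsmul c (s x)) \<in> K" unfolding K_def by blast
    next
      fix s a' assume "s \<in> K" and a': "a' \<in> C0_functions X"
      then obtain b where b: "continuous_map X euclidean b" "s = ract k b" by (auto simp: K_def)
      have "ract s a' = ract k (\<lambda>x. a' x * b x)"
        by (rule ext) (simp add: b(2) ract_def vsmul_vsmul)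
      moreover have "continuous_map X euclidean (\<lambda>x. a' x * b x)"
        using a' b(1) by (intro cmult_cont) (auto simp: C0_functions_def)
      ultimately show "ract s a' \<in> K" unfolding K_def by blast
    qed
    have kK: "k \<in> K"
    proof -
      have z1: "k = ract k (\<lambda>x. 1)" by (rule ext) (simp add: ract_def vsmul_one)
      have c1: "continuous_map X euclidean (\<lambda>x. 1::complex)" by simp
      show ?thesis unfolding K_def
        by (intro CollectI exI[of _ "\<lambda>x. 1::complex"] conjI z1 c1)
    qed
    have "k x0 = m x0" by (simp add: k_def ract_def a_def f(3) vsmul_one)
    then have knz: "k \<noteq> zero_section" using mx0 by (auto simp: zero_section_def)
    have "K \<noteq> {zero_section}" using kK knz by blast
    then have "N \<inter> K \<noteq> {zero_section}" using ess subK unfolding essential_submodule_def by blast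
    moreover have "zero_section \<in> N \<inter> K" using N_zero[OF CF CS] subK by (simp add: submodule_def)
    ultimately obtain n where n: "n \<in> N" "n \<in> K" "n \<noteq> zero_section" by blast
    then obtain b where b: "continuous_map X euclidean b" "n = ract k b" by (auto simp: K_def)
    have nG: "n \<in> \<Gamma>" by (rule N_Gamma[OF CF CS n(1)])
    obtain y where y: "n y \<noteq> vzero" using n(3) by (auto simp: zero_section_def)
    have yt: "y \<in> topspace X" using y sec_out[OF CF nG] by blast
    define Op where "Op = {z \<in> topspace X. hnorm (ip z) (n z) \<in> {0<..}}"
    have Oo: "openin X Op" unfolding Op_def
      by (rule openin_continuous_map_preimage[OF cf_cont[OF CF nG]]) simp
    have nnz: "n z \<noteq> vzero \<longleftrightarrow> hnorm (ip z) (n z) > 0" if z: "z \<in> topspace X" for z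
      using hnorm_eq0[OF cf_hs[OF CF z] sec_in[OF CF nG z]] hnorm_nonneg[OF cf_hs[OF CF z] sec_in[OF CF nG z]]
      by linarith
    have yO: "y \<in> Op" using y yt nnz by (simp add: Op_def)
    have nform: "n z = vsmul (b z * complex_of_real (f z)) (m z)" for z
      by (simp add: b(2) k_def ract_def a_def vsmul_vsmul)
    have OW: "Op \<subseteq> W"
    proof
      fix z assume z: "z \<in> Op"
      then have zt: "z \<in> topspace X" by (simp add: Op_def)
      have "n z \<noteq> vzero" using z nnz[OF zt] by (simp add: Op_def)
      then have "f z \<noteq> 0" unfolding nform by (auto simp: vsmul_zero_left)
      then have "z \<in> C" using f(6) zt by blast
      then show "z \<in> W" using f(5) by blast
    qed
    have "y \<in> X closure_of Z" using yO OW WZ by blast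
    then obtain z where z: "z \<in> Z" "z \<in> Op" using yO Oo unfolding in_closure_of by blast
    have zt: "z \<in> topspace X" using z by (simp add: Z_def)
    define c where "c = b z * complex_of_real (f z)"
    have "n z \<noteq> vzero" using z(2) nnz[OF zt] by (simp add: Op_def)
    then have cnz: "c \<noteq> 0" unfolding nform c_def[symmetric] by (auto simp: vsmul_zero_left)
    have "m z = vsmul (1 / c) (n z)" unfolding nform c_def[symmetric] using cnz
      by (simp add: vsmul_vsmul vsmul_one)
    moreover have "(\<lambda>y. vsmul (1 / c) (n y)) z \<in> fibre_closure H ip N z"
      by (rule FC1[OF CF CS N_smul[OF CF CS n(1)] zt])
    ultimately have "m z \<in> fibre_closure H ip N z" by simp
    then show False using z(1) by (simp add: Z_def)
  qed
next
  note LC = assms(1) and HS = assms(2) and CF = assms(3) and CS = assms(4)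
  assume R: "\<forall>m\<in>C0_sections X H ip \<Gamma>. nowhere_dense_in X {x\<in>topspace X. m x \<notin> fibre_closure H ip N x}"
  show "essential_submodule X H ip \<Gamma> N"
    unfolding essential_submodule_def
  proof (intro allI impI)
    fix K assume KK: "submodule X H ip \<Gamma> K \<and> K \<noteq> {zero_section}"
    have KC0: "K \<subseteq> C0_sections X H ip \<Gamma>" and K0: "zero_section \<in> K"
      and Kr: "\<And>s a. s \<in> K \<Longrightarrow> a \<in> C0_functions X \<Longrightarrow> ract s a \<in> K"
      using KK unfolding submodule_def by blast+
    obtain k where k: "k \<in> K" "k \<noteq> zero_section" using KK K0 by blast
    have kC0: "k \<in> C0_sections X H ip \<Gamma>" using k KC0 by blast
    have kG: "k \<in> \<Gamma>" using kC0 by (simp add: C0_sections_def)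
    obtain y0 where y0: "k y0 \<noteq> vzero" using k(2) by (auto simp: zero_section_def)
    have y0t: "y0 \<in> topspace X" using y0 sec_out[OF CF kG] by blast
    define Op where "Op = {z \<in> topspace X. hnorm (ip z) (k z) \<in> {0<..}}"
    have Oo: "openin X Op" unfolding Op_def
      by (rule openin_continuous_map_preimage[OF cf_cont[OF CF kG]]) simp
    have nnz: "k z \<noteq> vzero \<longleftrightarrow> hnorm (ip z) (k z) > 0" if z: "z \<in> topspace X" for z
      using hnorm_eq0[OF cf_hs[OF CF z] sec_in[OF CF kG z]] hnorm_nonneg[OF cf_hs[OF CF z] sec_in[OF CF kG z]]
      by linarith
    have y0O: "y0 \<in> Op" using y0 y0t nnz by (simp add: Op_def)
    define Z where "Z = {x\<in>topspace X. k x \<notin> fibre_closure H ip N x}"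
    have ndZ: "X interior_of (X closure_of Z) = {}" using R kC0 by (simp add: nowhere_dense_in_def Z_def)
    have "\<not> Op \<subseteq> X closure_of Z"
    proof
      assume "Op \<subseteq> X closure_of Z"
      then have "Op \<subseteq> X interior_of (X closure_of Z)" using Oo by (rule interior_of_maximal)
      then show False using ndZ y0O by blast
    qed
    then obtain x0 where x0: "x0 \<in> Op" "x0 \<notin> X closure_of Z" by blast
    define G where "G = Op - X closure_of Z"
    have Go: "openin X G" unfolding G_def using Oo by (intro openin_diff) simp_all
    have x0G: "x0 \<in> G" using x0 by (simp add: G_def)
    obtain f C where f: "continuous_map X euclideanreal f"
      "\<forall>x\<in>topspace X. 0 \<le> f x \<and> f x \<le> 1" "f x0 = 1" "compactin X C" "C \<subseteq> G"
      "\<forall>x\<in>topspace X. x \<notin> C \<longrightarrow> f x = 0"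
      using bump[OF LC HS Go x0G] by metis
    have aC0: "(\<lambda>x. complex_of_real (f x)) \<in> C0_functions X" by (rule C0_real[OF f(1) f(4) f(6)])
    have kaK: "ract k (\<lambda>x. complex_of_real (f x)) \<in> K" by (rule Kr[OF k(1) aC0])
    have Zt: "Z \<subseteq> topspace X" by (auto simp: Z_def)
    have kL: "\<forall>x\<in>C. k x \<in> fibre_closure H ip N x"
    proof
      fix x assume x: "x \<in> C"
      then have "x \<in> G" using f(5) by blast
      then have "x \<notin> X closure_of Z" "x \<in> topspace X" by (auto simp: G_def Op_def)
      then show "k x \<in> fibre_closure H ip N x" using closure_of_subset[OF Zt] by (auto simp: Z_def)
    qed
    have kaN: "ract k (\<lambda>x. complex_of_real (f x)) \<in> N"
      by (rule loc_in_N[OF CF CS LC HS kG f(1) f(2) f(4) f(6) kL]) (use kaK KC0 in blast)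
    have "ract k (\<lambda>x. complex_of_real (f x)) x0 = k x0" by (simp add: ract_def f(3) vsmul_one)
    moreover have "k x0 \<noteq> vzero" using x0(1) nnz by (simp add: Op_def)
    ultimately have "ract k (\<lambda>x. complex_of_real (f x)) \<noteq> zero_section"
      by (auto simp: zero_section_def)
    then show "N \<inter> K \<noteq> {zero_section}" using kaN kaK by blast
  qed
qed


end
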